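(* Let $p>2$ be an integer, $\theta\in(0,1)$, let $\bm X\in\mathbb R^{n\times r}$ have i.i.d. $\mathcal{BG}(\theta)$ entries, and $\gamma_p=2^{p/2}\Gamma(\frac{p+1}{2})/\sqrt\pi$. For every $\bm Q\in\mathbb O(n)$ there exists $\bm P\in\mathrm{SP}(n)$ such that $$\theta-\frac{1}{nr\gamma_p}\mathbb E_{\bm X}\|\bm Q\bm X\|_p^p\ge\frac{\theta(1-\theta)}{2nC_p}\|\bm Q-\bm P\|_F^2,\qquad C_p=\big(1-2(0.5)^{p/2}\big)^{-1}.$$
   Context: $\mathcal{BG}(\theta)$ is the law of $b\cdot g$ with $b\sim\mathrm{Ber}(\theta)$, $g\sim\mathcal N(0,1)$ independent. $\mathbb O(n)$: real $n\times n$ orthogonal matrices; $\mathrm{SP}(n)$: signed permutation matrices. For a matrix $\bm M$, $\|\bm M\|_p^p=\sum_{i,j}|M_{ij}|^p$; $\|\cdot\|_F$ the Frobenius norm; $\Gamma$ the Gamma function. *)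

theory Defs
  imports "HOL-Probability.Probability"
begin

definition std_gaussian :: "real measure" where
  "std_gaussian = density lborel (\<lambda>x. ennreal (std_normal_density x))"

definition BG :: "real \<Rightarrow> real measure" where
  "BG \<theta> = distr (measure_pmf (bernoulli_pmf \<theta>) \<Otimes>\<^sub>M std_gaussian) borel
              (\<lambda>(b, g). (if b then 1 else 0) * g)"

definition BG_matrix :: "real \<Rightarrow> (('n::finite \<times> 'r::finite) \<Rightarrow> real) measure" where
  "BG_matrix \<theta> = PiM UNIV (\<lambda>_. BG \<theta>)"

definition mat_of_entries :: "(('n::finite \<times> 'r::finite) \<Rightarrow> real) \<Rightarrow> real^'r^'n" where
  "mat_of_entries x = (\<chi> i j. x (i, j))"

definition entry_pnorm_pow :: "nat \<Rightarrow> real^'c^'m \<Rightarrow> real" where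
  "entry_pnorm_pow p M = (\<Sum>i\<in>UNIV. \<Sum>j\<in>UNIV. \<bar>M $ i $ j\<bar> ^ p)"

definition frob_sq :: "real^'c^'m \<Rightarrow> real" where
  "frob_sq M = (\<Sum>i\<in>UNIV. \<Sum>j\<in>UNIV. (M $ i $ j)\<^sup>2)"

definition signed_perm_matrix :: "real^'n^'n \<Rightarrow> bool" where
  "signed_perm_matrix P \<longleftrightarrow> (\<exists>\<sigma> s. \<sigma> permutes (UNIV::'n set) \<and> (\<forall>i. s i \<in> {-1, 1::real}) \<and>
      (\<forall>i j. P $ i $ j = (if j = \<sigma> i then s i else 0)))"

definition gamma_p :: "nat \<Rightarrow> real" where
  "gamma_p p = 2 powr (real p / 2) * Gamma ((real p + 1) / 2) / sqrt pi"

definition C_p :: "nat \<Rightarrow> real" where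
  "C_p p = 1 / (1 - 2 * (1/2) powr (real p / 2))"

end

theory Submission
  imports Defs
begin


lemma prob_space_std_gaussian: "prob_space std_gaussian"
  unfolding std_gaussian_def by (rule prob_space_normal_density) simp

lemma sets_std_gaussian[simp, measurable_cong]: "sets std_gaussian = sets borel"
  unfolding std_gaussian_def by simp

lemma space_std_gaussian[simp]: "space std_gaussian = UNIV"
  unfolding std_gaussian_def by simp

lemma sets_BG[simp, measurable_cong]: "sets (BG \<theta>) = sets borel"
  unfolding BG_def by simp

lemma BG_emeasure:
  assumes "0 \<le> \<theta>" "\<theta> \<le> 1" and A: "A \<in> sets borel"
  shows "emeasure (BG \<theta>) A = ennreal \<theta> * emeasure std_gaussian A + ennreal (1-\<theta>) * indicator A 0"
proof -
  interpret G: prob_space std_gaussian by (rule prob_space_std_gaussian)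
  let ?h = "\<lambda>(b::bool, g::real). (if b then 1 else 0) * g"
  have m: "?h \<in> measurable (measure_pmf (bernoulli_pmf \<theta>) \<Otimes>\<^sub>M std_gaussian) borel"
    by measurable
  have "emeasure (BG \<theta>) A = emeasure (measure_pmf (bernoulli_pmf \<theta>) \<Otimes>\<^sub>M std_gaussian) (?h -` A \<inter> space (measure_pmf (bernoulli_pmf \<theta>) \<Otimes>\<^sub>M std_gaussian))"
    unfolding BG_def using m A by (simp add: emeasure_distr)
  also have "\<dots> = (\<integral>\<^sup>+x. emeasure std_gaussian (Pair x -` (?h -` A \<inter> space (measure_pmf (bernoulli_pmf \<theta>) \<Otimes>\<^sub>M std_gaussian))) \<partial>measure_pmf (bernoulli_pmf \<theta>))"
    apply (rule G.emeasure_pair_measure_alt)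
    using m A by measurable
  also have "\<dots> = (\<Sum>x\<in>{True,False}. emeasure std_gaussian (Pair x -` (?h -` A \<inter> space (measure_pmf (bernoulli_pmf \<theta>) \<Otimes>\<^sub>M std_gaussian))) * pmf (bernoulli_pmf \<theta>) x)"
    by (rule nn_integral_measure_pmf_support) auto
  also have "\<dots> = ennreal \<theta> * emeasure std_gaussian A + ennreal (1-\<theta>) * indicator A 0"
    using assms by (auto simp: space_pair_measure indicator_def vimage_def mult.commute cong: conj_cong)
       (auto simp: Collect_mem_eq G.emeasure_space_1[simplified])
  finally show ?thesis .
qed


definition BP :: "real \<Rightarrow> ('a::finite \<Rightarrow> bool) measure" where
  "BP \<theta> = measure_pmf (Pi_pmf UNIV False (\<lambda>_. bernoulli_pmf \<theta>))"

definition GP :: "('a::finite \<Rightarrow> real) measure" where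
  "GP = PiM UNIV (\<lambda>_. std_gaussian)"

definition HH :: "('a \<Rightarrow> bool) \<times> ('a \<Rightarrow> real) \<Rightarrow> 'a \<Rightarrow> real" where
  "HH = (\<lambda>(\<beta>, \<gamma>) a. (if \<beta> a then 1 else 0) * \<gamma> a)"

definition wt :: "real \<Rightarrow> ('a::finite \<Rightarrow> bool) \<Rightarrow> real" where
  "wt \<theta> \<beta> = (\<Prod>a\<in>UNIV. if \<beta> a then \<theta> else 1 - \<theta>)"

lemma pmf_BP: "0 \<le> \<theta> \<Longrightarrow> \<theta> \<le> 1 \<Longrightarrow> pmf (Pi_pmf UNIV False (\<lambda>_. bernoulli_pmf \<theta>)) \<beta> = wt \<theta> (\<beta>::'a::finite \<Rightarrow> bool)"
  by (simp add: pmf_Pi wt_def) (intro prod.cong refl; simp)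

lemma sum_prod_bool:
  fixes h :: "'a::finite \<Rightarrow> bool \<Rightarrow> 'c::comm_semiring_1"
  shows "(\<Sum>\<beta>\<in>UNIV. \<Prod>a\<in>UNIV. h a (\<beta> a)) = (\<Prod>a\<in>UNIV. h a True + h a False)"
proof -
  have "(\<Prod>a\<in>UNIV. h a True + h a False) = (\<Prod>a\<in>UNIV. \<Sum>v\<in>UNIV. h a v)"
    by (simp add: UNIV_bool add.commute)
  also have "\<dots> = (\<Sum>g\<in>PiE UNIV (\<lambda>_. UNIV). \<Prod>a\<in>UNIV. h a (g a))"
    by (rule prod_sum_PiE) auto
  also have "PiE UNIV (\<lambda>_. UNIV) = (UNIV :: ('a \<Rightarrow> bool) set)" by auto
  finally show ?thesis by simp
qed

lemma prob_space_BG: "prob_space (BG \<theta>)"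
proof -
  interpret G: prob_space std_gaussian by (rule prob_space_std_gaussian)
  interpret P: pair_prob_space "measure_pmf (bernoulli_pmf \<theta>)" std_gaussian
    by (simp add: pair_prob_space_def pair_sigma_finite_def prob_space_imp_sigma_finite prob_space_measure_pmf G.prob_space_axioms)
  show ?thesis unfolding BG_def by (rule P.P.prob_space_distr) measurable
qed

lemma HH_measurable: "HH \<in> measurable (BP \<theta> \<Otimes>\<^sub>M GP) (PiM UNIV (\<lambda>_::'a::finite. BG \<theta>))"
proof (rule measurable_PiM_single')
  fix a :: 'a
  have "(\<lambda>x. (if fst x a then 1 else 0) * snd x a) \<in> borel_measurable (BP \<theta> \<Otimes>\<^sub>M GP)"
  proof (rule borel_measurable_times)
    have "(\<lambda>\<beta>::'a\<Rightarrow>bool. if \<beta> a then 1 else (0::real)) \<in> borel_measurable (BP \<theta>)"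
      unfolding BP_def by simp
    then show "(\<lambda>x. if fst x a then 1 else (0::real)) \<in> borel_measurable (BP \<theta> \<Otimes>\<^sub>M GP)"
      by (rule measurable_compose[OF measurable_fst, of "\<lambda>\<beta>. if \<beta> a then 1 else 0", simplified])
    have "(\<lambda>\<gamma>::'a\<Rightarrow>real. \<gamma> a) \<in> measurable GP std_gaussian"
      unfolding GP_def by (rule measurable_component_singleton) simp
    then have "(\<lambda>\<gamma>::'a\<Rightarrow>real. \<gamma> a) \<in> borel_measurable GP"
      by (simp add: measurable_cong_sets[OF refl sets_std_gaussian])
    then show "(\<lambda>x. snd x a) \<in> borel_measurable (BP \<theta> \<Otimes>\<^sub>M GP)"
      by (rule measurable_compose[OF measurable_snd, of "\<lambda>\<gamma>. \<gamma> a", simplified])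
  qed
  then show "(\<lambda>\<omega>. HH \<omega> a) \<in> measurable (BP \<theta> \<Otimes>\<^sub>M GP) (BG \<theta>)"
    unfolding HH_def by (simp add: case_prod_beta measurable_cong_sets[OF refl sets_BG])
qed (auto simp: space_PiM BG_def)

lemma PiM_BG_eq:
  assumes "0 \<le> \<theta>" "\<theta> \<le> 1"
  shows "PiM UNIV (\<lambda>_. BG \<theta>) = distr (BP \<theta> \<Otimes>\<^sub>M GP) (PiM UNIV (\<lambda>_. BG \<theta>)) (HH :: _ \<Rightarrow> 'a::finite \<Rightarrow> real)"
proof -
  interpret G: prob_space std_gaussian by (rule prob_space_std_gaussian)
  interpret GPs: product_prob_space "\<lambda>_::'a. std_gaussian" UNIV
    by unfold_locales
  interpret GP: prob_space "GP :: ('a \<Rightarrow> real) measure" unfolding GP_def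
    by (rule prob_space_PiM) (rule G.prob_space_axioms)
  interpret BGs: product_prob_space "\<lambda>_::'a. BG \<theta>" UNIV
    by (auto simp: product_prob_space_def product_prob_space_axioms_def product_sigma_finite_def prob_space_BG prob_space_imp_sigma_finite)
  have mH: "HH \<in> measurable (BP \<theta> \<Otimes>\<^sub>M GP) (PiM UNIV (\<lambda>_::'a. BG \<theta>))" by (rule HH_measurable)
  show ?thesis
  proof (rule BGs.PiM_eqI[symmetric])
    show "finite (UNIV::'a set)" by simp
    show "sets (distr (BP \<theta> \<Otimes>\<^sub>M GP) (PiM UNIV (\<lambda>_. BG \<theta>)) HH) = sets (PiM UNIV (\<lambda>_. BG \<theta>))"
      by simp
    fix A :: "'a \<Rightarrow> real set"
    assume A: "\<And>i. i \<in> UNIV \<Longrightarrow> A i \<in> sets (BG \<theta>)"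
    have Ab: "A i \<in> sets borel" for i using A[of i] by simp
    have box: "PiE UNIV A \<in> sets (PiM UNIV (\<lambda>_::'a. BG \<theta>))"
      using A by (intro sets_PiM_I_finite) auto
    define B where "B \<beta> a = (if \<beta> a then A a else if 0 \<in> A a then UNIV else {})" for \<beta> a
    have pre: "Pair \<beta> -` (HH -` PiE UNIV A \<inter> space (BP \<theta> \<Otimes>\<^sub>M GP)) = PiE UNIV (B \<beta>)" for \<beta>
    proof (intro set_eqI iffI)
      fix \<gamma> assume "\<gamma> \<in> Pair \<beta> -` (HH -` PiE UNIV A \<inter> space (BP \<theta> \<Otimes>\<^sub>M GP))"
      then have hh: "\<And>i. (if \<beta> i then 1 else 0) * \<gamma> i \<in> A i"
        by (auto simp: HH_def PiE_iff)
      have "\<gamma> i \<in> B \<beta> i" for i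
        using hh[of i] unfolding B_def by (cases "\<beta> i") auto
      then show "\<gamma> \<in> PiE UNIV (B \<beta>)" by (auto simp: PiE_iff)
    next
      fix \<gamma> assume "\<gamma> \<in> PiE UNIV (B \<beta>)"
      then have gb: "\<And>i. \<gamma> i \<in> B \<beta> i" by (auto simp: PiE_iff)
      have "(if \<beta> i then 1 else 0) * \<gamma> i \<in> A i" for i
        using gb[of i] unfolding B_def by (cases "\<beta> i"; cases "0 \<in> A i") auto
      then show "\<gamma> \<in> Pair \<beta> -` (HH -` PiE UNIV A \<inter> space (BP \<theta> \<Otimes>\<^sub>M GP))"
        by (auto simp: HH_def B_def space_pair_measure GP_def space_PiM PiE_iff BP_def split: if_splits)
    qed
    have "emeasure (distr (BP \<theta> \<Otimes>\<^sub>M GP) (PiM UNIV (\<lambda>_. BG \<theta>)) HH) (PiE UNIV A)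
        = emeasure (BP \<theta> \<Otimes>\<^sub>M GP) (HH -` PiE UNIV A \<inter> space (BP \<theta> \<Otimes>\<^sub>M GP))"
      using mH box by (simp add: emeasure_distr)
    also have "\<dots> = (\<integral>\<^sup>+\<beta>. emeasure GP (Pair \<beta> -` (HH -` PiE UNIV A \<inter> space (BP \<theta> \<Otimes>\<^sub>M GP))) \<partial>BP \<theta>)"
      by (rule GP.emeasure_pair_measure_alt) (use mH box in measurable)
    also have "\<dots> = (\<integral>\<^sup>+\<beta>. emeasure GP (PiE UNIV (B \<beta>)) \<partial>BP \<theta>)"
      by (simp only: pre)
    also have "\<dots> = (\<Sum>\<beta>\<in>UNIV. emeasure GP (PiE UNIV (B \<beta>)) * pmf (Pi_pmf UNIV False (\<lambda>_. bernoulli_pmf \<theta>)) \<beta>)"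
      unfolding BP_def by (rule nn_integral_measure_pmf_support) auto
    also have "\<dots> = (\<Sum>\<beta>\<in>UNIV. \<Prod>a\<in>UNIV. emeasure std_gaussian (B \<beta> a) * ennreal (if \<beta> a then \<theta> else 1 - \<theta>))"
    proof (rule sum.cong[OF refl])
      fix \<beta> :: "'a \<Rightarrow> bool"
      have "B \<beta> a \<in> sets std_gaussian" for a using Ab by (simp add: B_def)
      then have "emeasure GP (PiE UNIV (B \<beta>)) = (\<Prod>a\<in>UNIV. emeasure std_gaussian (B \<beta> a))"
        unfolding GP_def by (intro GPs.emeasure_PiM) auto
      moreover have "ennreal (pmf (Pi_pmf UNIV False (\<lambda>_. bernoulli_pmf \<theta>)) \<beta>) = (\<Prod>a\<in>UNIV. ennreal (if \<beta> a then \<theta> else 1 - \<theta>))"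
        using assms by (simp add: pmf_BP wt_def prod_ennreal)
      ultimately show "emeasure GP (PiE UNIV (B \<beta>)) * pmf (Pi_pmf UNIV False (\<lambda>_. bernoulli_pmf \<theta>)) \<beta> = (\<Prod>a\<in>UNIV. emeasure std_gaussian (B \<beta> a) * ennreal (if \<beta> a then \<theta> else 1 - \<theta>))"
        by (simp add: prod.distrib)
    qed
    also have "\<dots> = (\<Prod>a\<in>UNIV. emeasure std_gaussian (A a) * ennreal \<theta> + emeasure std_gaussian (if 0 \<in> A a then UNIV else {}) * ennreal (1-\<theta>))"
      by (subst sum_prod_bool[of "\<lambda>a v. emeasure std_gaussian (if v then A a else if 0 \<in> A a then UNIV else {}) * ennreal (if v then \<theta> else 1 - \<theta>)", unfolded B_def[symmetric]]) (simp add: B_def)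
    also have "\<dots> = (\<Prod>a\<in>UNIV. emeasure (BG \<theta>) (A a))"
      using assms Ab by (intro prod.cong refl) (auto simp: BG_emeasure G.emeasure_space_1[simplified] mult.commute)
    finally show "emeasure (distr (BP \<theta> \<Otimes>\<^sub>M GP) (PiM UNIV (\<lambda>_. BG \<theta>)) HH) (PiE UNIV A) = (\<Prod>i\<in>UNIV. emeasure (BG \<theta>) (A i))" .
  qed
qed


lemma Gamma_half_int: "Gamma (real k + 1/2) = fact (2*k) / (4^k * fact k) * sqrt pi"
proof (induction k)
  case 0 then show ?case by (simp add: Gamma_one_half_real)
next
  case (Suc k)
  have nz: "real k + 1/2 \<notin> \<int>\<^sub>\<le>\<^sub>0"
  proof
    assume "real k + 1/2 \<in> \<int>\<^sub>\<le>\<^sub>0"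
    then have "real k + 1/2 \<le> 0" by (rule nonpos_Ints_nonpos)
    then show False by simp
  qed
  have "Gamma (real (Suc k) + 1/2) = Gamma ((real k + 1/2) + 1)" by (simp add: algebra_simps)
  also have "\<dots> = (real k + 1/2) * Gamma (real k + 1/2)" by (rule Gamma_plus1[OF nz])
  also have "\<dots> = (real k + 1/2) * (fact (2*k) / (4^k * fact k) * sqrt pi)" by (simp add: Suc)
  also have "\<dots> = fact (2*Suc k) / (4^Suc k * fact (Suc k)) * sqrt pi"
  proof -
    have f: "fact (2*Suc k) = (2*real k+2)*(2*real k+1) * (fact (2*k) :: real)"
      by (simp add: fact_Suc algebra_simps)
    have "fact (2*Suc k) / (4^Suc k * fact (Suc k)) = ((2*real k+2)*(2*real k+1) / (4 * (real k + 1))) * (fact (2*k) / (4^k * fact k))"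
      unfolding f by (simp add: fact_Suc field_simps)
    also have "(2*real k+2)*(2*real k+1) / (4 * (real k + 1)) = real k + 1/2"
      by (simp add: field_simps)
    finally show ?thesis by simp
    
  qed
  finally show ?case .
qed

lemma gamma_p_even: "gamma_p (2*k) = fact (2*k) / (2^k * fact k)"
proof -
  have "gamma_p (2*k) = 2 ^ k * Gamma (real k + 1/2) / sqrt pi"
  proof -
    have "Gamma ((real (2*k) + 1) / 2) = Gamma (real k + 1/2)" by (rule arg_cong[where f=Gamma]) simp
    then show ?thesis unfolding gamma_p_def by (simp add: powr_realpow)
  qed
  also have "\<dots> = fact (2*k) / (2^k * fact k)"
    apply (subst Gamma_half_int)
    apply (simp add: field_simps)
    apply (simp add: power_mult_distrib[symmetric])
    done
  finally show ?thesis .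
qed

lemma gamma_p_odd: "gamma_p (2*k+1) = 2^k * fact k * sqrt (2/pi)"
proof -
  have "2 powr (real (2*k+1) / 2) = 2^k * sqrt 2"
    by (simp add: powr_add add_divide_distrib powr_realpow powr_half_sqrt)
  moreover have "Gamma ((real (2*k+1) + 1) / 2) = fact k"
  proof -
    have "Gamma ((real (2*k+1) + 1) / 2) = Gamma (1 + of_nat k)" by (rule arg_cong[where f=Gamma]) simp
    then show ?thesis using Gamma_fact[of k] by simp
  qed
  ultimately show ?thesis
    unfolding gamma_p_def by (simp add: real_sqrt_divide)
qed

lemma normal_abs_moment:
  assumes "0 < \<sigma>"
  shows "has_bochner_integral lborel (\<lambda>x. normal_density 0 \<sigma> x * \<bar>x\<bar>^p) (gamma_p p * \<sigma>^p)"
proof (cases "even p")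
  case True
  then obtain k where p: "p = 2*k" by (auto elim: evenE)
  have "has_bochner_integral lborel (\<lambda>x. normal_density 0 \<sigma> x * (x - 0) ^ (2 * k)) (fact (2 * k) / ((2 / \<sigma>\<^sup>2)^k * fact k))"
    using normal_moment_even[where k=k and \<mu>=0 and \<sigma>=\<sigma>] assms by simp
  moreover have "fact (2 * k) / ((2 / \<sigma>\<^sup>2)^k * fact k) = gamma_p p * \<sigma>^p"
  proof -
    have "gamma_p p * \<sigma>^p = fact(2*k)/(2^k * fact k) * (\<sigma>\<^sup>2)^k"
      by (simp only: p gamma_p_even power_mult)
    then show ?thesis using assms by (simp add: power_divide field_simps)
  qed
  ultimately show ?thesis by (simp add: p power_even_abs)
next
  case False
  then obtain k where p: "p = 2*k+1" by (auto elim: oddE)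
  have "has_bochner_integral lborel (\<lambda>x. normal_density 0 \<sigma> x * \<bar>x - 0\<bar>^(2 * k + 1)) (2^k * \<sigma>^(2 * k + 1) * fact k * sqrt (2 / pi))"
    using normal_moment_abs_odd[where k=k and \<mu>=0 and \<sigma>=\<sigma>] assms by simp
  moreover have eq: "2^k * \<sigma>^(2 * k + 1) * fact k * sqrt (2 / pi) = gamma_p (2*k+1) * \<sigma>^(2*k+1)"
    by (simp only: gamma_p_odd) (simp add: mult_ac)
  ultimately show ?thesis unfolding p by (simp only: eq diff_zero)
qed



lemma prob_space_GP: "prob_space (GP :: ('a::finite \<Rightarrow> real) measure)"
  unfolding GP_def by (rule prob_space_PiM) (rule prob_space_std_gaussian)

lemma sets_GP: "sets (GP :: ('a::finite \<Rightarrow> real) measure) = sets (PiM UNIV (\<lambda>_::'a. borel))"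
  unfolding GP_def by (rule sets_PiM_cong) auto

lemma distr_GP_coord: "distr (GP :: ('a::finite \<Rightarrow> real) measure) borel (\<lambda>\<gamma>. \<gamma> a) = std_gaussian"
proof -
  have "distr (GP :: ('a::finite \<Rightarrow> real) measure) borel (\<lambda>\<gamma>. \<gamma> a) = distr GP std_gaussian (\<lambda>\<gamma>. \<gamma> a)"
    by (rule distr_cong) auto
  also have "\<dots> = std_gaussian"
    unfolding GP_def by (rule distr_PiM_component) (auto intro: prob_space_std_gaussian)
  finally show ?thesis .
qed

lemma GP_coord_distributed:
  "distributed (GP :: ('a::finite \<Rightarrow> real) measure) lborel (\<lambda>\<gamma>. \<gamma> a) (normal_density 0 1)"
proof -
  have m: "(\<lambda>\<gamma>::'a\<Rightarrow>real. \<gamma> a) \<in> measurable GP borel"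
    by (simp add: measurable_cong_sets[OF sets_GP refl])
  have "distr (GP :: ('a::finite \<Rightarrow> real) measure) lborel (\<lambda>\<gamma>. \<gamma> a) = distr GP borel (\<lambda>\<gamma>. \<gamma> a)"
    by (rule distr_cong) auto
  also have "\<dots> = density lborel (\<lambda>x. ennreal (normal_density 0 1 x))"
    by (simp add: distr_GP_coord std_gaussian_def)
  finally show ?thesis
    unfolding distributed_def using m by simp
qed

lemma GP_indep: "prob_space.indep_vars (GP :: ('a::finite \<Rightarrow> real) measure) (\<lambda>_. borel) (\<lambda>a \<gamma>. \<gamma> a) UNIV"
proof -
  interpret prob_space "GP :: ('a::finite \<Rightarrow> real) measure" by (rule prob_space_GP)
  have rv: "random_variable borel (\<lambda>\<gamma>::'a\<Rightarrow>real. \<gamma> a)" for a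
    by (simp add: measurable_cong_sets[OF sets_GP refl])
  have "distr GP (PiM UNIV (\<lambda>_::'a. borel)) (\<lambda>x. \<lambda>i\<in>UNIV. x i) = distr GP (PiM UNIV (\<lambda>_::'a. borel)) (\<lambda>x. x)"
    by (rule distr_cong) auto
  also have "\<dots> = GP" by (rule distr_id2) (rule sets_GP[symmetric])
  also have "\<dots> = PiM UNIV (\<lambda>i. distr GP borel (\<lambda>x. x i))"
    unfolding distr_GP_coord unfolding GP_def ..
  finally show ?thesis
    by (subst indep_vars_iff_distr_eq_PiM) (use rv in auto)
qed

lemma gauss_sum_nn:
  fixes c :: "'a::finite \<Rightarrow> real"
  assumes "p > 0"
  shows "(\<integral>\<^sup>+\<gamma>. ennreal (\<bar>\<Sum>a\<in>UNIV. c a * \<gamma> a\<bar>^p) \<partial>GP) = ennreal (gamma_p p * sqrt (\<Sum>a\<in>UNIV. (c a)\<^sup>2)^p)"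
proof (cases "\<forall>a. c a = 0")
  case True
  then show ?thesis using assms by (simp add: zero_power)
next
  case False
  interpret prob_space "GP :: ('a::finite \<Rightarrow> real) measure" by (rule prob_space_GP)
  define I where "I = {a. c a \<noteq> 0}"
  have I: "finite I" "I \<noteq> {}" using False by (auto simp: I_def)
  have ind: "indep_vars (\<lambda>_. borel) (\<lambda>a \<gamma>. c a * \<gamma> a) I"
    by (rule indep_vars_compose2[OF indep_vars_subset[OF GP_indep], where Y="\<lambda>a x. c a * x"]) auto
  have dist: "distributed GP lborel (\<lambda>\<gamma>. c a * \<gamma> a) (normal_density 0 \<bar>c a\<bar>)" if "a \<in> I" for a
    using normal_density_affine[OF GP_coord_distributed, of "c a" 0] that by (simp add: I_def)
  have "distributed GP lborel (\<lambda>\<gamma>. \<Sum>a\<in>I. c a * \<gamma> a) (normal_density (\<Sum>a\<in>I. 0) (sqrt (\<Sum>a\<in>I. \<bar>c a\<bar>\<^sup>2)))"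
    by (rule sum_indep_normal[OF I ind]) (auto simp: I_def dist)
  moreover have "(\<lambda>\<gamma>. \<Sum>a\<in>I. c a * \<gamma> a) = (\<lambda>\<gamma>. \<Sum>a\<in>UNIV. c a * \<gamma> a)"
    by (intro ext sum.mono_neutral_left) (auto simp: I_def)
  moreover have "(\<Sum>a\<in>I. \<bar>c a\<bar>\<^sup>2) = (\<Sum>a\<in>UNIV. (c a)\<^sup>2)"
    by (simp, intro sum.mono_neutral_left) (auto simp: I_def)
  ultimately have D: "distributed GP lborel (\<lambda>\<gamma>. \<Sum>a\<in>UNIV. c a * \<gamma> a) (normal_density 0 (sqrt (\<Sum>a\<in>UNIV. (c a)\<^sup>2)))"
    by simp
  define \<sigma> where "\<sigma> = sqrt (\<Sum>a\<in>UNIV. (c a)\<^sup>2)"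
  have "(\<Sum>a\<in>UNIV. (c a)\<^sup>2) > 0"
  proof -
    obtain a0 where "c a0 \<noteq> 0" using False by auto
    then show ?thesis by (intro sum_pos2[of UNIV a0]) auto
  qed
  then have \<sigma>: "\<sigma> > 0" by (simp add: \<sigma>_def)
  have hb: "has_bochner_integral lborel (\<lambda>x. normal_density 0 \<sigma> x * \<bar>x\<bar>^p) (gamma_p p * \<sigma>^p)"
    by (rule normal_abs_moment[OF \<sigma>])
  have "(\<integral>\<^sup>+\<gamma>. ennreal (\<bar>\<Sum>a\<in>UNIV. c a * \<gamma> a\<bar>^p) \<partial>GP) = (\<integral>\<^sup>+x. ennreal (normal_density 0 \<sigma> x) * ennreal (\<bar>x\<bar>^p) \<partial>lborel)"
    using distributed_nn_integral[OF D, of "\<lambda>x. ennreal (\<bar>x\<bar>^p)"] by (simp add: \<sigma>_def)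
  also have "\<dots> = (\<integral>\<^sup>+x. ennreal (normal_density 0 \<sigma> x * \<bar>x\<bar>^p) \<partial>lborel)"
    by (simp add: ennreal_mult)
  also have "\<dots> = ennreal (gamma_p p * \<sigma>^p)"
    using hb by (subst nn_integral_eq_integral) (auto simp: has_bochner_integral_iff)
  finally show ?thesis by (simp add: \<sigma>_def)
qed



lemma nn_integral_PiM_BG:
  assumes "0 \<le> \<theta>" "\<theta> \<le> 1"
    and f: "f \<in> borel_measurable (PiM UNIV (\<lambda>_::'a::finite. borel))"
  shows "(\<integral>\<^sup>+x. f x \<partial>PiM UNIV (\<lambda>_::'a. BG \<theta>)) = (\<Sum>\<beta>\<in>UNIV. ennreal (wt \<theta> \<beta>) * (\<integral>\<^sup>+\<gamma>. f (HH (\<beta>, \<gamma>)) \<partial>GP))"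
proof -
  interpret GP: prob_space "GP :: ('a \<Rightarrow> real) measure" by (rule prob_space_GP)
  have sets_eq: "sets (PiM UNIV (\<lambda>_::'a. BG \<theta>)) = sets (PiM UNIV (\<lambda>_::'a. borel))"
    by (rule sets_PiM_cong) auto
  have f': "f \<in> borel_measurable (PiM UNIV (\<lambda>_::'a. BG \<theta>))"
    using f by (simp add: measurable_cong_sets[OF sets_eq refl])
  have fH: "(\<lambda>x. f (HH x)) \<in> borel_measurable (BP \<theta> \<Otimes>\<^sub>M GP)"
    by (rule measurable_compose[OF HH_measurable f'])
  have "(\<integral>\<^sup>+x. f x \<partial>PiM UNIV (\<lambda>_::'a. BG \<theta>)) = (\<integral>\<^sup>+x. f x \<partial>distr (BP \<theta> \<Otimes>\<^sub>M GP) (PiM UNIV (\<lambda>_::'a. BG \<theta>)) HH)"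
    by (subst PiM_BG_eq[OF assms(1,2)]) (rule refl)
  also have "\<dots> = (\<integral>\<^sup>+x. f (HH x) \<partial>(BP \<theta> \<Otimes>\<^sub>M GP))"
    by (rule nn_integral_distr[OF HH_measurable]) (simp add: f')
  also have "\<dots> = (\<integral>\<^sup>+\<beta>. \<integral>\<^sup>+\<gamma>. f (HH (\<beta>, \<gamma>)) \<partial>GP \<partial>BP \<theta>)"
    by (rule GP.nn_integral_fst[symmetric, of "\<lambda>x. f (HH x)", simplified]) (rule fH)
  also have "\<dots> = (\<Sum>\<beta>\<in>UNIV. (\<integral>\<^sup>+\<gamma>. f (HH (\<beta>, \<gamma>)) \<partial>GP) * pmf (Pi_pmf UNIV False (\<lambda>_. bernoulli_pmf \<theta>)) \<beta>)"
    unfolding BP_def by (rule nn_integral_measure_pmf_support) auto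
  also have "\<dots> = (\<Sum>\<beta>\<in>UNIV. ennreal (wt \<theta> \<beta>) * (\<integral>\<^sup>+\<gamma>. f (HH (\<beta>, \<gamma>)) \<partial>GP))"
    using assms by (simp add: pmf_BP mult.commute)
  finally show ?thesis .
qed



definition tt :: "real^'n^'n \<Rightarrow> 'n \<Rightarrow> 'r \<Rightarrow> ('n \<times> 'r \<Rightarrow> bool) \<Rightarrow> real" where
  "tt Q i j \<beta> = (\<Sum>k\<in>UNIV. (Q$i$k)\<^sup>2 * (if \<beta> (k,j) then 1 else 0))"

lemma wt_nonneg: "0 \<le> \<theta> \<Longrightarrow> \<theta> \<le> 1 \<Longrightarrow> 0 \<le> wt \<theta> \<beta>"
  unfolding wt_def by (intro prod_nonneg) auto

lemma gamma_p_nonneg: "gamma_p p \<ge> 0"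
  unfolding gamma_p_def by (intro divide_nonneg_nonneg mult_nonneg_nonneg) (auto intro: less_imp_le)

lemma sum_col:
  fixes h :: "'n::finite \<Rightarrow> 'b::comm_monoid_add"
  shows "(\<Sum>a\<in>(UNIV::('n \<times> 'r::finite) set). if snd a = j then h (fst a) else 0) = (\<Sum>k\<in>UNIV. h k)"
proof -
  have "(\<Sum>a\<in>(UNIV::('n \<times> 'r) set). if snd a = j then h (fst a) else 0)
      = (\<Sum>(k,j')\<in>UNIV \<times> UNIV. if j' = j then h k else 0)"
    by (simp add: UNIV_Times_UNIV case_prod_beta)
  also have "\<dots> = (\<Sum>k\<in>UNIV. \<Sum>j'\<in>UNIV. if j' = j then h k else 0)"
    by (rule sum.cartesian_product[symmetric])
  also have "\<dots> = (\<Sum>k\<in>UNIV. h k)" by simp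
  finally show ?thesis .
qed

lemma entry_meas:
  fixes c :: "'n::finite \<Rightarrow> real" and j :: "'r::finite"
  shows "(\<lambda>x. \<bar>\<Sum>k\<in>UNIV. c k * x (k, j)\<bar> ^ p) \<in> borel_measurable (PiM UNIV (\<lambda>_::('n \<times> 'r). (borel :: real measure)))"
proof -
  have [measurable]: "\<And>a. (\<lambda>x. x a) \<in> borel_measurable (PiM UNIV (\<lambda>_::('n \<times> 'r). (borel :: real measure)))"
    by (rule measurable_component_singleton) simp
  show ?thesis by measurable
qed

lemma integral_formula:
  fixes Q :: "real^'n::finite^'n" and p :: nat
  assumes "0 \<le> \<theta>" "\<theta> \<le> 1" "p > 0"
  shows "(\<integral>x. entry_pnorm_pow p (Q ** (mat_of_entries x :: real^'r::finite^'n)) \<partial>(BG_matrix \<theta> :: (('n \<times> 'r) \<Rightarrow> real) measure))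
    = (\<Sum>\<beta>\<in>(UNIV::('n \<times> 'r \<Rightarrow> bool) set). wt \<theta> \<beta> * (\<Sum>i\<in>UNIV. \<Sum>j\<in>UNIV. gamma_p p * sqrt (tt Q i j \<beta>)^p))"
proof -
  define F where "F i j x = \<bar>\<Sum>k\<in>UNIV. Q$i$k * x (k, j)\<bar> ^ p" for i j and x :: "'n \<times> 'r \<Rightarrow> real"
  have ent: "entry_pnorm_pow p (Q ** (mat_of_entries x :: real^'r^'n)) = (\<Sum>i\<in>UNIV. \<Sum>j\<in>UNIV. F i j x)" for x
    by (simp add: entry_pnorm_pow_def matrix_matrix_mult_def mat_of_entries_def F_def)
  have Fm: "F i j \<in> borel_measurable (PiM UNIV (\<lambda>_::('n \<times> 'r). borel))" for i j
    unfolding F_def by (rule entry_meas)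
  have sets_eq: "sets (BG_matrix \<theta> :: (('n \<times> 'r) \<Rightarrow> real) measure) = sets (PiM UNIV (\<lambda>_::('n \<times> 'r). borel))"
    unfolding BG_matrix_def by (rule sets_PiM_cong) auto
  have Fm': "F i j \<in> borel_measurable (BG_matrix \<theta>)" for i j
    using Fm by (simp add: measurable_cong_sets[OF sets_eq refl])
  have inner: "(\<integral>\<^sup>+\<gamma>. ennreal (F i j (HH (\<beta>, \<gamma>))) \<partial>GP) = ennreal (gamma_p p * sqrt (tt Q i j \<beta>)^p)" for i j \<beta>
  proof -
    define c where "c a = (if snd a = j then Q$i$(fst a) * (if \<beta> (fst a, j) then 1 else 0) else 0)" for a :: "'n \<times> 'r"
    have "F i j (HH (\<beta>, \<gamma>)) = \<bar>\<Sum>a\<in>UNIV. c a * \<gamma> a\<bar> ^ p" for \<gamma>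
    proof -
      have "(\<Sum>a\<in>UNIV. c a * \<gamma> a) = (\<Sum>a\<in>(UNIV::('n \<times> 'r) set). if snd a = j then Q$i$(fst a) * (if \<beta> (fst a, j) then 1 else 0) * \<gamma> (fst a, j) else 0)"
        by (intro sum.cong) (auto simp: c_def)
      also have "\<dots> = (\<Sum>k\<in>UNIV. Q$i$k * (if \<beta> (k, j) then 1 else 0) * \<gamma> (k, j))"
        by (rule sum_col)
      finally show ?thesis by (simp add: F_def HH_def mult.assoc)
    qed
    moreover have "(\<Sum>a\<in>UNIV. (c a)\<^sup>2) = tt Q i j \<beta>"
    proof -
      have "(\<Sum>a\<in>UNIV. (c a)\<^sup>2) = (\<Sum>a\<in>(UNIV::('n \<times> 'r) set). if snd a = j then (Q$i$(fst a))\<^sup>2 * (if \<beta> (fst a, j) then 1 else 0) else 0)"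
        by (intro sum.cong) (auto simp: c_def power_mult_distrib)
      also have "\<dots> = tt Q i j \<beta>" unfolding tt_def by (rule sum_col)
      finally show ?thesis .
    qed
    ultimately show ?thesis using gauss_sum_nn[OF assms(3), of c] by simp
  qed
  have per_beta: "ennreal (wt \<theta> \<beta>) * (\<integral>\<^sup>+\<gamma>. ennreal (\<Sum>i\<in>UNIV. \<Sum>j\<in>UNIV. F i j (HH (\<beta>, \<gamma>))) \<partial>GP) = ennreal (wt \<theta> \<beta>) * (\<Sum>i\<in>UNIV. \<Sum>j\<in>UNIV. ennreal (gamma_p p * sqrt (tt Q i j \<beta>)^p))" for \<beta> :: "'n \<times> 'r \<Rightarrow> bool"
  proof -
    have "(\<integral>\<^sup>+\<gamma>. ennreal (\<Sum>i\<in>UNIV. \<Sum>j\<in>UNIV. F i j (HH (\<beta>, \<gamma>))) \<partial>GP) = (\<integral>\<^sup>+\<gamma>. (\<Sum>i\<in>UNIV. \<Sum>j\<in>UNIV. ennreal (F i j (HH (\<beta>, \<gamma>)))) \<partial>GP)"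
      by (simp add: F_def sum_nonneg)
    also have "\<dots> = (\<Sum>i\<in>UNIV. \<Sum>j\<in>UNIV. (\<integral>\<^sup>+\<gamma>. ennreal (F i j (HH (\<beta>, \<gamma>))) \<partial>GP))"
    proof -
      have mHb: "(\<lambda>\<gamma>. HH (\<beta>,\<gamma>)) \<in> measurable GP (PiM UNIV (\<lambda>_::'n\<times>'r. BG \<theta>))"
        using measurable_compose[OF measurable_Pair1'[of \<beta> "BP \<theta>" GP] HH_measurable] by (simp add: BP_def)
      have mF: "(\<lambda>\<gamma>. ennreal (F i j (HH (\<beta>, \<gamma>)))) \<in> borel_measurable GP" for i j
        using measurable_compose[OF mHb Fm'[unfolded BG_matrix_def]] by simp
      have "(\<integral>\<^sup>+\<gamma>. (\<Sum>i\<in>UNIV. \<Sum>j\<in>UNIV. ennreal (F i j (HH (\<beta>, \<gamma>)))) \<partial>GP) = (\<Sum>i\<in>UNIV. (\<integral>\<^sup>+\<gamma>. (\<Sum>j\<in>UNIV. ennreal (F i j (HH (\<beta>, \<gamma>)))) \<partial>GP))"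
        by (rule nn_integral_sum) (intro borel_measurable_sum mF)
      also have "\<dots> = (\<Sum>i\<in>UNIV. \<Sum>j\<in>UNIV. (\<integral>\<^sup>+\<gamma>. ennreal (F i j (HH (\<beta>, \<gamma>))) \<partial>GP))"
        by (intro sum.cong refl nn_integral_sum mF)
      finally show ?thesis .
    qed
    also have "\<dots> = (\<Sum>i\<in>UNIV. \<Sum>j\<in>UNIV. ennreal (gamma_p p * sqrt (tt Q i j \<beta>)^p))"
      by (simp add: inner)
    finally show "ennreal (wt \<theta> \<beta>) * (\<integral>\<^sup>+\<gamma>. ennreal (\<Sum>i\<in>UNIV. \<Sum>j\<in>UNIV. F i j (HH (\<beta>, \<gamma>))) \<partial>GP) = ennreal (wt \<theta> \<beta>) * (\<Sum>i\<in>UNIV. \<Sum>j\<in>UNIV. ennreal (gamma_p p * sqrt (tt Q i j \<beta>)^p))" by simp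
  qed
  have "(\<integral>\<^sup>+x. ennreal (\<Sum>i\<in>UNIV. \<Sum>j\<in>UNIV. F i j x) \<partial>(BG_matrix \<theta> :: (('n \<times> 'r) \<Rightarrow> real) measure))
      = (\<Sum>\<beta>\<in>(UNIV::('n \<times> 'r \<Rightarrow> bool) set). ennreal (wt \<theta> \<beta>) * (\<integral>\<^sup>+\<gamma>. ennreal (\<Sum>i\<in>UNIV. \<Sum>j\<in>UNIV. F i j (HH (\<beta>, \<gamma>))) \<partial>GP))"
    unfolding BG_matrix_def
    by (rule nn_integral_PiM_BG[OF assms(1,2)]) (use Fm in measurable)
  also have "\<dots> = (\<Sum>\<beta>\<in>(UNIV::('n \<times> 'r \<Rightarrow> bool) set). ennreal (wt \<theta> \<beta>) * (\<Sum>i\<in>UNIV. \<Sum>j\<in>UNIV. ennreal (gamma_p p * sqrt (tt Q i j \<beta>)^p)))"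
    by (simp add: per_beta)
  also have "\<dots> = ennreal (\<Sum>\<beta>\<in>(UNIV::('n \<times> 'r \<Rightarrow> bool) set). wt \<theta> \<beta> * (\<Sum>i\<in>UNIV. \<Sum>j\<in>UNIV. gamma_p p * sqrt (tt Q i j \<beta>)^p))"
  proof -
    have nn0: "0 \<le> gamma_p p * sqrt (tt Q i j \<beta>)^p" for i j \<beta>
      by (intro mult_nonneg_nonneg gamma_p_nonneg zero_le_power real_sqrt_ge_zero) (auto simp: tt_def intro!: sum_nonneg)
    have s1: "(\<Sum>i\<in>UNIV. \<Sum>j\<in>UNIV. ennreal (gamma_p p * sqrt (tt Q i j \<beta>)^p)) = ennreal (\<Sum>i\<in>UNIV. \<Sum>j\<in>UNIV. gamma_p p * sqrt (tt Q i j \<beta>)^p)" for \<beta>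
      by (simp add: nn0 sum_nonneg)
    have s2: "ennreal (wt \<theta> \<beta>) * ennreal (\<Sum>i\<in>UNIV. \<Sum>j\<in>UNIV. gamma_p p * sqrt (tt Q i j \<beta>)^p) = ennreal (wt \<theta> \<beta> * (\<Sum>i\<in>UNIV. \<Sum>j\<in>UNIV. gamma_p p * sqrt (tt Q i j \<beta>)^p))" for \<beta>
      using assms by (subst ennreal_mult) (auto intro!: wt_nonneg sum_nonneg nn0)
    show ?thesis unfolding s1 s2 using assms
      by (subst sum_ennreal) (auto intro!: mult_nonneg_nonneg wt_nonneg sum_nonneg nn0)
  qed
  finally have nn: "(\<integral>\<^sup>+x. ennreal (\<Sum>i\<in>UNIV. \<Sum>j\<in>UNIV. F i j x) \<partial>(BG_matrix \<theta> :: (('n \<times> 'r) \<Rightarrow> real) measure)) = ennreal (\<Sum>\<beta>\<in>(UNIV::('n \<times> 'r \<Rightarrow> bool) set). wt \<theta> \<beta> * (\<Sum>i\<in>UNIV. \<Sum>j\<in>UNIV. gamma_p p * sqrt (tt Q i j \<beta>)^p))" .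
  have "(\<integral>x. entry_pnorm_pow p (Q ** (mat_of_entries x :: real^'r::finite^'n)) \<partial>(BG_matrix \<theta> :: (('n \<times> 'r) \<Rightarrow> real) measure))
     = (\<integral>x. (\<Sum>i\<in>UNIV. \<Sum>j\<in>UNIV. F i j x) \<partial>(BG_matrix \<theta> :: (('n \<times> 'r) \<Rightarrow> real) measure))"
    by (simp add: ent)
  also have "\<dots> = enn2real (\<integral>\<^sup>+x. ennreal (\<Sum>i\<in>UNIV. \<Sum>j\<in>UNIV. F i j x) \<partial>(BG_matrix \<theta> :: (('n \<times> 'r) \<Rightarrow> real) measure))"
    apply (rule integral_eq_nn_integral)
     apply (intro borel_measurable_sum Fm')
    apply (auto simp: F_def intro!: sum_nonneg)
    done
  also have "\<dots> = (\<Sum>\<beta>\<in>(UNIV::('n \<times> 'r \<Rightarrow> bool) set). wt \<theta> \<beta> * (\<Sum>i\<in>UNIV. \<Sum>j\<in>UNIV. gamma_p p * sqrt (tt Q i j \<beta>)^p))"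
    unfolding nn using assms
    by (intro enn2real_ennreal sum_nonneg mult_nonneg_nonneg wt_nonneg gamma_p_nonneg zero_le_power real_sqrt_ge_zero) (auto simp: tt_def intro!: sum_nonneg)
  finally show ?thesis .
qed



definition EE :: "real \<Rightarrow> (('a::finite \<Rightarrow> bool) \<Rightarrow> real) \<Rightarrow> real" where
  "EE \<theta> F = (\<Sum>\<beta>\<in>UNIV. wt \<theta> \<beta> * F \<beta>)"

definition ind :: "bool \<Rightarrow> real" where "ind b = (if b then 1 else 0)"

lemma EE_add: "EE \<theta> (\<lambda>\<beta>. F \<beta> + G \<beta>) = EE \<theta> F + EE \<theta> G"
  unfolding EE_def by (simp add: distrib_left sum.distrib)

lemma EE_diff: "EE \<theta> (\<lambda>\<beta>. F \<beta> - G \<beta>) = EE \<theta> F - EE \<theta> G"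
  unfolding EE_def by (simp add: right_diff_distrib sum_subtractf)

lemma EE_cmult: "EE \<theta> (\<lambda>\<beta>. c * F \<beta>) = c * EE \<theta> F"
  unfolding EE_def by (simp add: sum_distrib_left mult_ac)

lemma EE_sum: "EE \<theta> (\<lambda>\<beta>. \<Sum>k\<in>A. F k \<beta>) = (\<Sum>k\<in>A. EE \<theta> (F k))"
  unfolding EE_def by (simp add: sum_distrib_left sum.swap[of _ A])

lemma EE_mono: "0 \<le> \<theta> \<Longrightarrow> \<theta> \<le> 1 \<Longrightarrow> (\<And>\<beta>. F \<beta> \<le> G \<beta>) \<Longrightarrow> EE \<theta> F \<le> EE \<theta> G"
  unfolding EE_def by (intro sum_mono mult_left_mono) (auto intro: wt_nonneg)

lemma wt_prod_bool:
  fixes h :: "'a::finite \<Rightarrow> bool \<Rightarrow> real"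
  shows "EE \<theta> (\<lambda>\<beta>. \<Prod>a\<in>UNIV. h a (\<beta> a)) = (\<Prod>a\<in>UNIV. \<theta> * h a True + (1-\<theta>) * h a False)"
proof -
  have "EE \<theta> (\<lambda>\<beta>. \<Prod>a\<in>UNIV. h a (\<beta> a)) = (\<Sum>\<beta>\<in>UNIV. \<Prod>a\<in>UNIV. (if \<beta> a then \<theta> else 1 - \<theta>) * h a (\<beta> a))"
    unfolding EE_def wt_def by (simp add: prod.distrib)
  also have "\<dots> = (\<Prod>a\<in>UNIV. \<theta> * h a True + (1-\<theta>) * h a False)"
    by (subst sum_prod_bool) simp
  finally show ?thesis .
qed

lemma EE_const: "EE \<theta> (\<lambda>\<beta>::'a::finite \<Rightarrow> bool. c) = c"
proof -
  have "EE \<theta> (\<lambda>\<beta>::'a \<Rightarrow> bool. \<Prod>a\<in>UNIV. (\<lambda>a v. 1) a (\<beta> a)) = 1"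
    by (subst wt_prod_bool) simp
  then have "EE \<theta> (\<lambda>\<beta>::'a \<Rightarrow> bool. 1) = 1" by simp
  then show ?thesis using EE_cmult[of \<theta> c "\<lambda>_::'a \<Rightarrow> bool. 1"] by simp
qed

lemma EE_ind: "EE \<theta> (\<lambda>\<beta>::'a::finite \<Rightarrow> bool. ind (\<beta> a)) = \<theta>"
proof -
  have "EE \<theta> (\<lambda>\<beta>::'a \<Rightarrow> bool. \<Prod>x\<in>UNIV. (\<lambda>x v. if x = a then ind v else 1) x (\<beta> x)) = (\<Prod>x\<in>UNIV. if x = a then \<theta> else 1)"
    by (subst wt_prod_bool) (intro prod.cong refl, auto simp: ind_def)
  moreover have "(\<lambda>\<beta>::'a \<Rightarrow> bool. \<Prod>x\<in>UNIV. (\<lambda>x v. if x = a then ind v else 1) x (\<beta> x)) = (\<lambda>\<beta>. ind (\<beta> a))"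
    by (simp add: prod.delta)
  ultimately show ?thesis by (simp add: prod.delta)
qed

lemma EE_ind2:
  assumes "a \<noteq> a'"
  shows "EE \<theta> (\<lambda>\<beta>::'a::finite \<Rightarrow> bool. ind (\<beta> a) * ind (\<not> \<beta> a')) = \<theta> * (1 - \<theta>)"
proof -
  let ?h = "\<lambda>x v. (if x = a then ind v else 1) * (if x = a' then ind (\<not> v) else 1)"
  have "EE \<theta> (\<lambda>\<beta>::'a \<Rightarrow> bool. \<Prod>x\<in>UNIV. ?h x (\<beta> x)) = (\<Prod>x\<in>UNIV. (if x = a then \<theta> else 1) * (if x = a' then 1 - \<theta> else 1))"
    by (subst wt_prod_bool) (intro prod.cong refl, use assms in \<open>auto simp: ind_def\<close>)
  moreover have "(\<lambda>\<beta>::'a \<Rightarrow> bool. \<Prod>x\<in>UNIV. ?h x (\<beta> x)) = (\<lambda>\<beta>. ind (\<beta> a) * ind (\<not> \<beta> a'))"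
    by (simp add: prod.distrib prod.delta)
  ultimately show ?thesis by (simp add: prod.distrib prod.delta)
qed



lemma EE_min:
  fixes w :: "'k::finite \<Rightarrow> real" and c :: "'k \<Rightarrow> 'k \<Rightarrow> real" and e :: "'k \<Rightarrow> 'a::finite"
  assumes th: "0 \<le> \<theta>" "\<theta> \<le> 1" and e: "inj e" and w1: "sum w UNIV = 1"
    and c0: "\<And>k l. 0 \<le> c k l" and csym: "\<And>k l. c k l = c l k" and cdiag: "\<And>k. c k k = 0"
    and crow: "\<And>k. (\<Sum>l\<in>UNIV. c k l) \<le> w k"
  shows "EE \<theta> (\<lambda>\<beta>. min (\<Sum>k\<in>UNIV. w k * ind (\<beta> (e k))) (1 - (\<Sum>k\<in>UNIV. w k * ind (\<beta> (e k)))))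
           \<ge> \<theta> * (1 - \<theta>) * (\<Sum>k\<in>UNIV. \<Sum>l\<in>UNIV. c k l)"
proof -
  define R where "R \<beta> = (\<Sum>k\<in>UNIV. \<Sum>l\<in>UNIV. c k l * (ind (\<beta> (e k)) * ind (\<not> \<beta> (e l))))" for \<beta> :: "'a \<Rightarrow> bool"
  have ind01: "0 \<le> ind b" "ind b \<le> 1" for b by (auto simp: ind_def)
  have indn: "ind (\<not> b) = 1 - ind b" for b by (auto simp: ind_def)
  have R1: "R \<beta> \<le> (\<Sum>k\<in>UNIV. w k * ind (\<beta> (e k)))" for \<beta>
  proof -
    have "R \<beta> \<le> (\<Sum>k\<in>UNIV. \<Sum>l\<in>UNIV. c k l * ind (\<beta> (e k)))"
      unfolding R_def by (intro sum_mono mult_left_mono) (auto simp: ind_def c0)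
    also have "\<dots> = (\<Sum>k\<in>UNIV. (\<Sum>l\<in>UNIV. c k l) * ind (\<beta> (e k)))"
      by (simp add: sum_distrib_right)
    also have "\<dots> \<le> (\<Sum>k\<in>UNIV. w k * ind (\<beta> (e k)))"
      by (intro sum_mono mult_right_mono crow ind01)
    finally show ?thesis .
  qed
  have R2: "R \<beta> \<le> 1 - (\<Sum>k\<in>UNIV. w k * ind (\<beta> (e k)))" for \<beta>
  proof -
    have "R \<beta> \<le> (\<Sum>k\<in>UNIV. \<Sum>l\<in>UNIV. c k l * ind (\<not> \<beta> (e l)))"
      unfolding R_def by (intro sum_mono mult_left_mono) (auto simp: ind_def c0)
    also have "\<dots> = (\<Sum>l\<in>UNIV. (\<Sum>k\<in>UNIV. c l k) * ind (\<not> \<beta> (e l)))"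
      by (subst sum.swap) (simp add: sum_distrib_right csym)
    also have "\<dots> \<le> (\<Sum>l\<in>UNIV. w l * ind (\<not> \<beta> (e l)))"
      by (intro sum_mono mult_right_mono crow ind01)
    also have "\<dots> = 1 - (\<Sum>k\<in>UNIV. w k * ind (\<beta> (e k)))"
      by (simp add: indn right_diff_distrib sum_subtractf w1)
    finally show ?thesis .
  qed
  have "EE \<theta> R = (\<Sum>k\<in>UNIV. \<Sum>l\<in>UNIV. c k l * EE \<theta> (\<lambda>\<beta>. ind (\<beta> (e k)) * ind (\<not> \<beta> (e l))))"
    unfolding R_def by (simp add: EE_sum EE_cmult)
  also have "\<dots> = (\<Sum>k\<in>UNIV. \<Sum>l\<in>UNIV. c k l * (\<theta> * (1 - \<theta>)))"
  proof (intro sum.cong refl)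
    fix k l
    show "c k l * EE \<theta> (\<lambda>\<beta>. ind (\<beta> (e k)) * ind (\<not> \<beta> (e l))) = c k l * (\<theta> * (1 - \<theta>))"
    proof (cases "k = l")
      case True then show ?thesis by (simp add: cdiag)
    next
      case False
      then have "e k \<noteq> e l" using e by (auto dest: injD)
      then show ?thesis by (simp add: EE_ind2)
    qed
  qed
  also have "\<dots> = \<theta> * (1 - \<theta>) * (\<Sum>k\<in>UNIV. \<Sum>l\<in>UNIV. c k l)"
    by (simp add: sum_distrib_left sum_distrib_right mult_ac)
  finally have "EE \<theta> R = \<theta> * (1 - \<theta>) * (\<Sum>k\<in>UNIV. \<Sum>l\<in>UNIV. c k l)" .
  moreover have "EE \<theta> R \<le> EE \<theta> (\<lambda>\<beta>. min (\<Sum>k\<in>UNIV. w k * ind (\<beta> (e k))) (1 - (\<Sum>k\<in>UNIV. w k * ind (\<beta> (e k)))))"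
    using th R1 R2 by (intro EE_mono) auto
  ultimately show ?thesis by simp
qed

lemma g_bound:
  fixes t :: real and p :: nat
  assumes "0 \<le> t" "t \<le> 1" "p \<ge> 2"
  shows "t - sqrt t ^ p \<ge> (1 - 2 * sqrt (1/2) ^ p) * min t (1 - t)"
proof -
  define s where "s = sqrt (1/2::real)"
  have s2: "s^2 = 1/2" by (simp add: s_def)
  have s0: "0 \<le> s" by (simp add: s_def)
  show ?thesis
  proof (cases "t \<le> 1/2")
    case True
    have pp: "p = 2 + (p - 2)" using assms by simp
    have "sqrt t ^ p = sqrt t ^ 2 * sqrt t ^ (p - 2)"
      by (metis pp power_add)
    also have "\<dots> = t * sqrt t ^ (p - 2)" using assms by simp
    also have "\<dots> \<le> t * s ^ (p - 2)"
      using True assms by (intro mult_left_mono power_mono) (auto simp: s_def)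
    also have "s ^ (p - 2) = 2 * s ^ p"
    proof -
      have "s ^ p = s^2 * s^(p-2)" by (metis pp power_add)
      then show ?thesis by (simp add: s2)
    qed
    finally have "sqrt t ^ p \<le> t * (2 * s ^ p)" .
    moreover have "min t (1 - t) = t" using True by simp
    ultimately show ?thesis by (simp add: s_def[symmetric] algebra_simps)
  next
    case False
    have cv: "convex_on {0<..} (\<lambda>x::real. x powr (real p / 2))"
      by (rule powr_convex) (use assms in simp)
    define u where "u = 2 * t - 1"
    have u: "0 \<le> u" "u \<le> 1" using False assms by (auto simp: u_def)
    have tu: "t = (1 - u) *\<^sub>R (1/2) + u *\<^sub>R 1" by (simp add: u_def algebra_simps)
    have "t powr (real p / 2) \<le> (1 - u) * (1/2) powr (real p / 2) + u * 1 powr (real p / 2)"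
      unfolding tu by (rule convex_onD[OF cv]) (use u in auto)
    moreover have "x powr (real p / 2) = sqrt x ^ p" if "0 < x" for x :: real
    proof -
      have "sqrt x ^ p = (x powr (1/2)) powr real p"
        using that by (simp add: powr_half_sqrt powr_realpow)
      also have "\<dots> = x powr (real p / 2)" by (simp add: powr_powr)
      finally show ?thesis by simp
    qed
    ultimately have "sqrt t ^ p \<le> (1 - u) * s ^ p + u"
      using False by (simp add: s_def)
    moreover have "min t (1 - t) = 1 - t" using False by simp
    ultimately show ?thesis unfolding u_def s_def[symmetric] by (simp add: algebra_simps)
  qed
qed



lemma kappa_nonneg: "p \<ge> 2 \<Longrightarrow> 0 \<le> 1 - 2 * sqrt (1/2::real) ^ p"
proof -
  assume p: "p \<ge> 2"
  have "sqrt (1/2::real) ^ p \<le> sqrt (1/2) ^ 2"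
    using p by (intro power_decreasing) auto
  then show ?thesis by simp
qed

lemma sum_except:
  fixes f :: "'k::finite \<Rightarrow> real"
  shows "(\<Sum>l\<in>UNIV. if k = l then 0 else f l) = sum f UNIV - f k"
proof -
  have "(\<Sum>l\<in>UNIV. if k = l then 0 else f l) = (\<Sum>l\<in>UNIV. f l - (if k = l then f l else 0))"
    by (intro sum.cong) auto
  also have "\<dots> = sum f UNIV - f k" by (simp add: sum_subtractf)
  finally show ?thesis .
qed

lemma row_core:
  fixes w :: "'k::finite \<Rightarrow> real" and c :: "'k \<Rightarrow> 'k \<Rightarrow> real" and e :: "'k \<Rightarrow> 'a::finite"
  assumes th: "0 \<le> \<theta>" "\<theta> \<le> 1" and e: "inj e" and w0: "\<And>k. 0 \<le> w k" and w1: "sum w UNIV = 1"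
    and p: "p \<ge> 2"
    and c0: "\<And>k l. 0 \<le> c k l" and csym: "\<And>k l. c k l = c l k" and cdiag: "\<And>k. c k k = 0"
    and crow: "\<And>k. (\<Sum>l\<in>UNIV. c k l) \<le> w k"
  shows "EE \<theta> (\<lambda>\<beta>. (\<Sum>k\<in>UNIV. w k * ind (\<beta> (e k))) - sqrt (\<Sum>k\<in>UNIV. w k * ind (\<beta> (e k))) ^ p)
           \<ge> (1 - 2 * sqrt (1/2) ^ p) * (\<theta> * (1 - \<theta>) * (\<Sum>k\<in>UNIV. \<Sum>l\<in>UNIV. c k l))"
proof -
  define t where "t \<beta> = (\<Sum>k\<in>UNIV. w k * ind (\<beta> (e k)))" for \<beta> :: "'a \<Rightarrow> bool"
  define \<kappa> where "\<kappa> = 1 - 2 * sqrt (1/2::real) ^ p"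
  have \<kappa>: "0 \<le> \<kappa>" unfolding \<kappa>_def by (rule kappa_nonneg[OF p])
  have t01: "0 \<le> t \<beta>" "t \<beta> \<le> 1" for \<beta>
  proof -
    show "0 \<le> t \<beta>" unfolding t_def by (intro sum_nonneg mult_nonneg_nonneg w0) (simp add: ind_def)
    have "t \<beta> \<le> sum w UNIV" unfolding t_def by (intro sum_mono) (auto simp: ind_def w0)
    then show "t \<beta> \<le> 1" using w1 by simp
  qed
  have "EE \<theta> (\<lambda>\<beta>. \<kappa> * min (t \<beta>) (1 - t \<beta>)) \<le> EE \<theta> (\<lambda>\<beta>. t \<beta> - sqrt (t \<beta>) ^ p)"
  proof -
    have gb: "\<kappa> * min (t \<beta>) (1 - t \<beta>) \<le> t \<beta> - sqrt (t \<beta>)^p" for \<beta>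
      using g_bound[OF t01(1)[of \<beta>] t01(2)[of \<beta>] p] by (simp add: \<kappa>_def)
    show ?thesis using th by (intro EE_mono gb)
  qed
  moreover have "EE \<theta> (\<lambda>\<beta>. \<kappa> * min (t \<beta>) (1 - t \<beta>)) = \<kappa> * EE \<theta> (\<lambda>\<beta>. min (t \<beta>) (1 - t \<beta>))"
    by (rule EE_cmult)
  moreover have "\<theta> * (1 - \<theta>) * (\<Sum>k\<in>UNIV. \<Sum>l\<in>UNIV. c k l) \<le> EE \<theta> (\<lambda>\<beta>. min (t \<beta>) (1 - t \<beta>))"
    unfolding t_def by (rule EE_min[OF th e w1 c0 csym cdiag crow])
  ultimately show ?thesis using \<kappa>
    unfolding t_def[symmetric] \<kappa>_def[symmetric]
    by (smt (verit, best) mult_left_mono)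
qed

lemma row_caseA:
  fixes w :: "'k::finite \<Rightarrow> real" and e :: "'k \<Rightarrow> 'a::finite"
  assumes th: "0 \<le> \<theta>" "\<theta> \<le> 1" and e: "inj e" and w0: "\<And>k. 0 \<le> w k" and w1: "sum w UNIV = 1"
    and p: "p \<ge> 2" and k0: "w k0 > 1/2"
  shows "EE \<theta> (\<lambda>\<beta>. (\<Sum>k\<in>UNIV. w k * ind (\<beta> (e k))) - sqrt (\<Sum>k\<in>UNIV. w k * ind (\<beta> (e k))) ^ p)
           \<ge> (1 - 2 * sqrt (1/2) ^ p) * (\<theta> * (1 - \<theta>) * (1 - w k0))"
proof -
  define c where "c k l = (if k = l then 0 else w k * w l)" for k l
  have wle1: "w k \<le> 1" for k
    using w1 member_le_sum[of k UNIV w] w0 by auto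
  have rows: "(\<Sum>l\<in>UNIV. c k l) = w k - (w k)\<^sup>2" for k
  proof -
    have "(\<Sum>l\<in>UNIV. c k l) = (\<Sum>l\<in>UNIV. if k = l then 0 else w k * w l)" by (simp add: c_def)
    also have "\<dots> = (\<Sum>l\<in>UNIV. w k * w l) - w k * w k" by (rule sum_except)
    also have "\<dots> = w k - (w k)\<^sup>2" by (simp add: sum_distrib_left[symmetric] w1 power2_eq_square)
    finally show ?thesis .
  qed
  have core: "EE \<theta> (\<lambda>\<beta>. (\<Sum>k\<in>UNIV. w k * ind (\<beta> (e k))) - sqrt (\<Sum>k\<in>UNIV. w k * ind (\<beta> (e k))) ^ p)
           \<ge> (1 - 2 * sqrt (1/2) ^ p) * (\<theta> * (1 - \<theta>) * (\<Sum>k\<in>UNIV. \<Sum>l\<in>UNIV. c k l))"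
  proof (rule row_core[OF th e w0 w1 p])
    fix k l
    show "0 \<le> c k l" "c k l = c l k" "c k k = 0" by (auto simp: c_def w0)
    have "0 \<le> (w k)\<^sup>2" by simp
    then show "(\<Sum>l\<in>UNIV. c k l) \<le> w k" by (simp add: rows)
  qed
  have small: "w k \<le> w k0" for k
  proof (cases "k = k0")
    case False
    have "w k + w k0 = sum w {k, k0}" using False by simp
    also have "\<dots> \<le> sum w UNIV" by (rule sum_mono2) (auto simp: w0)
    finally show ?thesis using w1 k0 by simp
  qed simp
  have "(\<Sum>k\<in>UNIV. (w k)\<^sup>2) \<le> (\<Sum>k\<in>UNIV. w k * w k0)"
    by (intro sum_mono) (simp add: power2_eq_square mult_left_mono small w0)
  also have "\<dots> = w k0" by (simp add: sum_distrib_right[symmetric] w1)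
  finally have sq: "(\<Sum>k\<in>UNIV. (w k)\<^sup>2) \<le> w k0" .
  have "(\<Sum>k\<in>UNIV. \<Sum>l\<in>UNIV. c k l) = 1 - (\<Sum>k\<in>UNIV. (w k)\<^sup>2)"
    by (simp add: rows sum_subtractf w1)
  then have tot: "(\<Sum>k\<in>UNIV. \<Sum>l\<in>UNIV. c k l) \<ge> 1 - w k0" using sq by simp
  have "(1 - 2 * sqrt (1/2) ^ p) * (\<theta> * (1 - \<theta>) * (1 - w k0)) \<le> (1 - 2 * sqrt (1/2) ^ p) * (\<theta> * (1 - \<theta>) * (\<Sum>k\<in>UNIV. \<Sum>l\<in>UNIV. c k l))"
    using th tot kappa_nonneg[OF p] by (intro mult_left_mono) auto
  with core show ?thesis by linarith
qed



lemma exists_c: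
  fixes w :: "'k::finite \<Rightarrow> real"
  assumes w0: "\<And>k. 0 \<le> w k" and w1: "sum w UNIV = 1" and wh: "\<And>k. w k \<le> 1/2"
  shows "\<exists>c::'k \<Rightarrow> 'k \<Rightarrow> real. (\<forall>k l. 0 \<le> c k l) \<and> (\<forall>k l. c k l = c l k) \<and> (\<forall>k. c k k = 0) \<and> (\<forall>k. (\<Sum>l\<in>UNIV. c k l) = w k)"
proof (cases "\<exists>k0. w k0 = 1/2")
  case True
  then obtain k0 where k0: "w k0 = 1/2" by blast
  define c where "c k l = (if k = k0 \<and> l \<noteq> k0 then w l else if l = k0 \<and> k \<noteq> k0 then w k else 0)" for k l
  have "(\<Sum>l\<in>UNIV. c k l) = w k" for k
  proof (cases "k = k0")
    case True
    have "(\<Sum>l\<in>UNIV. c k l) = (\<Sum>l\<in>UNIV. if k0 = l then 0 else w l)"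
      using True by (intro sum.cong) (auto simp: c_def)
    also have "\<dots> = w k" using sum_except[of k0 w] True k0 w1 by simp
    finally show ?thesis .
  next
    case False
    have "(\<Sum>l\<in>UNIV. c k l) = (\<Sum>l\<in>UNIV. if l = k0 then w k else 0)"
      using False by (intro sum.cong) (auto simp: c_def)
    also have "\<dots> = w k" by simp
    finally show ?thesis .
  qed
  moreover have "\<forall>k l. 0 \<le> c k l" "\<forall>k l. c k l = c l k" "\<forall>k. c k k = 0"
    by (auto simp: c_def w0)
  ultimately show ?thesis by blast
next
  case False
  then have wl: "w k < 1/2" for k using wh[of k] by (metis order_le_imp_less_or_eq)
  have pos: "0 < 1 - 2 * w k" for k using wl[of k] by simp
  define A where "A = (\<Sum>k\<in>UNIV. w k / (1 - 2 * w k))"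
  have A0: "0 \<le> A" unfolding A_def using pos w0 by (intro sum_nonneg divide_nonneg_nonneg) (auto intro: less_imp_le)
  define u where "u k = 1 / ((1 + A) * (1 - 2 * w k))" for k
  have u0: "0 \<le> u k" for k unfolding u_def using A0 pos[of k] by simp
  define c where "c k l = (if k = l then 0 else w k * w l * (u k + u l))" for k l
  have U: "(\<Sum>l\<in>UNIV. w l * u l) = A / (1 + A)"
  proof -
    have "(\<Sum>l\<in>UNIV. w l * u l) = (\<Sum>l\<in>UNIV. (w l / (1 - 2 * w l)) / (1 + A))"
      by (intro sum.cong) (auto simp: u_def)
    also have "\<dots> = A / (1 + A)" unfolding A_def by (simp add: sum_divide_distrib)
    finally show ?thesis .
  qed
  have "(\<Sum>l\<in>UNIV. c k l) = w k" for k
  proof -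
    have "(\<Sum>l\<in>UNIV. c k l) = (\<Sum>l\<in>UNIV. w k * w l * (u k + u l)) - w k * w k * (u k + u k)"
      unfolding c_def by (rule sum_except)
    also have "(\<Sum>l\<in>UNIV. w k * w l * (u k + u l)) = w k * u k * sum w UNIV + w k * (\<Sum>l\<in>UNIV. w l * u l)"
      by (simp add: algebra_simps sum.distrib sum_distrib_left)
    also have "w k * u k * sum w UNIV + w k * (\<Sum>l\<in>UNIV. w l * u l) - w k * w k * (u k + u k)
        = w k * (u k * (1 - 2 * w k) + A / (1 + A))"
      by (simp only: w1 U) (simp add: algebra_simps)
    also have "u k * (1 - 2 * w k) = 1 / (1 + A)"
    proof -
      have n1: "1 - 2 * w k \<noteq> 0" using pos[of k] by simp
      have n2: "1 + A \<noteq> 0" using A0 by simp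
      have "u k * (1 - 2 * w k) = (1 * (1 - 2 * w k)) / ((1 + A) * (1 - 2 * w k))"
        by (simp add: u_def)
      also have "\<dots> = 1 / (1 + A)" using n1 by (rule nonzero_mult_divide_mult_cancel_right)
      finally show ?thesis .
    qed
    also have "1 / (1 + A) + A / (1 + A) = 1"
      using A0 by (simp add: add_divide_distrib[symmetric])
    finally show ?thesis by simp
  qed
  moreover have "\<forall>k l. 0 \<le> c k l" "\<forall>k l. c k l = c l k" "\<forall>k. c k k = 0"
    by (auto simp: c_def w0 u0 add.commute mult.commute intro!: mult_nonneg_nonneg add_nonneg_nonneg)
  ultimately show ?thesis by blast
qed

lemma row_caseB:
  fixes w :: "'k::finite \<Rightarrow> real" and e :: "'k \<Rightarrow> 'a::finite"
  assumes th: "0 \<le> \<theta>" "\<theta> \<le> 1" and e: "inj e" and w0: "\<And>k. 0 \<le> w k" and w1: "sum w UNIV = 1"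
    and p: "p \<ge> 2" and wh: "\<And>k. w k \<le> 1/2"
  shows "EE \<theta> (\<lambda>\<beta>. (\<Sum>k\<in>UNIV. w k * ind (\<beta> (e k))) - sqrt (\<Sum>k\<in>UNIV. w k * ind (\<beta> (e k))) ^ p)
           \<ge> (1 - 2 * sqrt (1/2) ^ p) * (\<theta> * (1 - \<theta>))"
proof -
  obtain c :: "'k \<Rightarrow> 'k \<Rightarrow> real" where c: "\<forall>k l. 0 \<le> c k l" "\<forall>k l. c k l = c l k" "\<forall>k. c k k = 0" "\<forall>k. (\<Sum>l\<in>UNIV. c k l) = w k"
    using exists_c[OF w0 w1 wh] by blast
  have "EE \<theta> (\<lambda>\<beta>. (\<Sum>k\<in>UNIV. w k * ind (\<beta> (e k))) - sqrt (\<Sum>k\<in>UNIV. w k * ind (\<beta> (e k))) ^ p)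
           \<ge> (1 - 2 * sqrt (1/2) ^ p) * (\<theta> * (1 - \<theta>) * (\<Sum>k\<in>UNIV. \<Sum>l\<in>UNIV. c k l))"
    by (rule row_core[OF th e w0 w1 p]) (use c in auto)
  moreover have "(\<Sum>k\<in>UNIV. \<Sum>l\<in>UNIV. c k l) = 1" using c(4) w1 by simp
  ultimately show ?thesis by simp
qed



lemma ortho_rows:
  fixes Q :: "real^'n::finite^'n"
  assumes "orthogonal_matrix Q"
  shows "(\<Sum>k\<in>UNIV. (Q$i$k)\<^sup>2) = 1"
proof -
  have "Q ** transpose Q = mat 1" using assms by (simp add: orthogonal_matrix_def)
  then have "(Q ** transpose Q)$i$i = 1" by (simp add: mat_def)
  then show ?thesis by (simp add: matrix_matrix_mult_def Finite_Cartesian_Product.transpose_def power2_eq_square)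
qed

lemma ortho_cols:
  fixes Q :: "real^'n::finite^'n"
  assumes "orthogonal_matrix Q"
  shows "(\<Sum>i\<in>UNIV. (Q$i$k)\<^sup>2) = 1"
proof -
  have "transpose Q ** Q = mat 1" using assms by (simp add: orthogonal_matrix_def)
  then have "(transpose Q ** Q)$k$k = 1" by (simp add: mat_def)
  then show ?thesis by (simp add: matrix_matrix_mult_def Finite_Cartesian_Product.transpose_def power2_eq_square)
qed

lemma two_big:
  fixes v :: "'k::finite \<Rightarrow> real"
  assumes "sum v UNIV = 1" "\<And>k. 0 \<le> v k" "v a > 1/2" "v b > 1/2"
  shows "a = b"
proof (rule ccontr)
  assume "a \<noteq> b"
  then have "v a + v b = sum v {a, b}" by simp
  also have "\<dots> \<le> sum v UNIV" by (rule sum_mono2) (auto simp: assms)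
  finally show False using assms by simp
qed

lemma extend_perm:
  fixes f :: "'a::finite \<Rightarrow> 'a"
  assumes "inj_on f S"
  shows "\<exists>\<sigma>. \<sigma> permutes UNIV \<and> (\<forall>i\<in>S. \<sigma> i = f i)"
proof -
  have "card (UNIV - S) = card (UNIV - f ` S)"
    using assms by (simp add: card_Diff_subset card_image)
  then obtain h where h: "bij_betw h (UNIV - S) (UNIV - f ` S)"
    using finite_same_card_bij[of "UNIV - S" "UNIV - f ` S"] by auto
  define \<sigma> where "\<sigma> i = (if i \<in> S then f i else h i)" for i
  have hin: "h x \<notin> f ` S" if "x \<notin> S" for x
    using h that unfolding bij_betw_def by blast
  have hinj: "inj_on h (UNIV - S)" using h by (simp add: bij_betw_def)
  have "inj \<sigma>"
  proof (rule injI)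
    fix x y assume xy: "\<sigma> x = \<sigma> y"
    show "x = y"
    proof (cases "x \<in> S"; cases "y \<in> S")
      assume "x \<in> S" "y \<in> S" then show ?thesis using xy assms by (auto simp: \<sigma>_def dest: inj_onD)
    next
      assume "x \<notin> S" "y \<notin> S" then show ?thesis using xy hinj by (auto simp: \<sigma>_def dest: inj_onD)
    next
      assume a: "x \<in> S" "y \<notin> S"
      then have "f x = h y" using xy by (simp add: \<sigma>_def)
      then show ?thesis using hin[OF a(2)] a(1) by (metis image_eqI)
    next
      assume a: "x \<notin> S" "y \<in> S"
      then have "f y = h x" using xy by (simp add: \<sigma>_def)
      then show ?thesis using hin[OF a(1)] a(2) by (metis image_eqI)
    qed
  qed
  then have "bij \<sigma>" by (simp add: bij_def finite_UNIV_inj_surj)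
  then have "\<sigma> permutes UNIV" by (intro bij_imp_permutes) auto
  then show ?thesis by (auto simp: \<sigma>_def)
qed


lemma tt_alt: "tt Q i j \<beta> = (\<Sum>k\<in>UNIV. (Q$i$k)\<^sup>2 * ind (\<beta> ((\<lambda>k. (k, j)) k)))"
  by (simp add: tt_def ind_def)

lemma EE_tt:
  fixes Q :: "real^'n::finite^'n" and j :: "'r::finite"
  assumes "orthogonal_matrix Q"
  shows "EE \<theta> (\<lambda>\<beta>::'n \<times> 'r \<Rightarrow> bool. tt Q i j \<beta>) = \<theta>"
proof -
  have "EE \<theta> (\<lambda>\<beta>::'n \<times> 'r \<Rightarrow> bool. tt Q i j \<beta>) = (\<Sum>k\<in>UNIV. (Q$i$k)\<^sup>2 * \<theta>)"
    unfolding tt_alt by (simp add: EE_sum EE_cmult EE_ind)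
  also have "\<dots> = \<theta>" using ortho_rows[OF assms] by (simp add: sum_distrib_right[symmetric])
  finally show ?thesis .
qed

theorem mainTheorem8:
  fixes p :: nat and \<theta> :: real and Q :: "real^'n::finite^'n"
  assumes "p > 2" and "0 < \<theta>" and "\<theta> < 1" and "orthogonal_matrix Q"
  shows "\<exists>P::real^'n^'n. signed_perm_matrix P \<and>
    \<theta> - (1 / (real CARD('n) * real CARD('r::finite) * gamma_p p)) *
        (\<integral>x. entry_pnorm_pow p (Q ** (mat_of_entries x :: real^'r^'n))
           \<partial>(BG_matrix \<theta> :: (('n \<times> 'r) \<Rightarrow> real) measure))
      \<ge> \<theta> * (1 - \<theta>) / (2 * real CARD('n) * C_p p) * frob_sq (Q - P)"
proof -
  have p2: "p \<ge> 2" and p0: "p > 0" using assms(1) by auto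
  have th: "0 \<le> \<theta>" "\<theta> \<le> 1" using assms(2,3) by auto
  define w where "w i k = (Q$i$k)\<^sup>2" for i k
  have w0: "0 \<le> w i k" for i k by (simp add: w_def)
  have w1: "sum (w i) UNIV = 1" for i using ortho_rows[OF assms(4)] by (simp add: w_def)
  have wc: "(\<Sum>i\<in>UNIV. w i k) = 1" for k using ortho_cols[OF assms(4)] by (simp add: w_def)
  have wle1: "w i k \<le> 1" for i k using w1[of i] member_le_sum[of k UNIV "w i"] w0 by auto
  define S where "S = {i. \<exists>k. w i k > 1/2}"
  define f where "f i = (SOME k. w i k > 1/2)" for i
  have fS: "w i (f i) > 1/2" if "i \<in> S" for i
    using that unfolding S_def f_def by (auto intro: someI_ex)
  have "inj_on f S"
  proof (rule inj_onI)
    fix i i' assume h: "i \<in> S" "i' \<in> S" "f i = f i'"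
    have a: "w i (f i') > 1/2" using fS[OF h(1)] h(3) by simp
    have b: "w i' (f i') > 1/2" using fS[OF h(2)] by simp
    show "i = i'" by (rule two_big[of "\<lambda>i. w i (f i')", OF wc w0 a b])
  qed
  then obtain \<sigma> where \<sigma>: "\<sigma> permutes UNIV" "\<forall>i\<in>S. \<sigma> i = f i"
    using extend_perm by blast
  define sg where "sg i = (if Q$i$(\<sigma> i) \<ge> 0 then 1 else -1 :: real)" for i
  define P :: "real^'n^'n" where "P = (\<chi> i j. if j = \<sigma> i then sg i else 0)"
  have sP: "signed_perm_matrix P"
    unfolding signed_perm_matrix_def using \<sigma>(1) by (intro exI[of _ \<sigma>] exI[of _ sg]) (auto simp: P_def sg_def)
  have sgq: "sg i * Q$i$(\<sigma> i) = \<bar>Q$i$(\<sigma> i)\<bar>" for i by (simp add: sg_def)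
  have sg2: "(sg i)\<^sup>2 = 1" for i by (simp add: sg_def)
  have frob: "frob_sq (Q - P) = (\<Sum>i\<in>UNIV. 2 - 2 * \<bar>Q$i$(\<sigma> i)\<bar>)"
    unfolding frob_sq_def
  proof (intro sum.cong refl)
    fix i
    have "(\<Sum>j\<in>UNIV. ((Q - P) $ i $ j)\<^sup>2) = (\<Sum>j\<in>UNIV. (Q$i$j)\<^sup>2 - 2 * (if j = \<sigma> i then sg i * Q$i$j else 0) + (if j = \<sigma> i then (sg i)\<^sup>2 else 0))"
      by (intro sum.cong refl) (auto simp: P_def power2_eq_square algebra_simps)
    also have "\<dots> = 1 - 2 * (sg i * Q$i$(\<sigma> i)) + (sg i)\<^sup>2"
      using ortho_rows[OF assms(4), of i] by (simp add: sum.distrib sum_subtractf sum_distrib_left[symmetric])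
    also have "\<dots> = 2 - 2 * \<bar>Q$i$(\<sigma> i)\<bar>" by (simp add: sgq sg2)
    finally show "(\<Sum>j\<in>UNIV. ((Q - P) $ i $ j)\<^sup>2) = 2 - 2 * \<bar>Q$i$(\<sigma> i)\<bar>" .
  qed
  define \<kappa> where "\<kappa> = 1 - 2 * sqrt (1/2::real) ^ p"
  have \<kappa>0: "0 \<le> \<kappa>" unfolding \<kappa>_def by (rule kappa_nonneg[OF p2])
  have Cp: "C_p p = 1 / \<kappa>"
  proof -
    have "(1/2::real) powr (real p / 2) = sqrt (1/2) ^ p"
    proof -
      have "sqrt (1/2::real) ^ p = ((1/2) powr (1/2)) powr real p"
        by (simp add: powr_half_sqrt powr_realpow)
      also have "\<dots> = (1/2) powr (real p / 2)" by (simp add: powr_powr)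
      finally show ?thesis by simp
    qed
    then show ?thesis by (simp add: C_p_def \<kappa>_def)
  qed
  have \<gamma>: "gamma_p p > 0"
    unfolding gamma_p_def by (intro divide_pos_pos mult_pos_pos) auto
  define N where "N = real CARD('n)"
  define R where "R = real CARD('r)"
  have N0: "N > 0" "R > 0" by (auto simp: N_def R_def)
  define \<phi> where "\<phi> i j = EE \<theta> (\<lambda>\<beta>::'n \<times> 'r \<Rightarrow> bool. sqrt (tt Q i j \<beta>) ^ p)" for i j
  define T where "T = (\<Sum>i\<in>UNIV. 1 - \<bar>Q$i$(\<sigma> i)\<bar>)"
  have integ: "(\<integral>x. entry_pnorm_pow p (Q ** (mat_of_entries x :: real^'r^'n)) \<partial>(BG_matrix \<theta> :: (('n \<times> 'r) \<Rightarrow> real) measure))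
      = gamma_p p * (\<Sum>i\<in>UNIV. \<Sum>j\<in>UNIV. \<phi> i j)"
  proof -
    have "(\<integral>x. entry_pnorm_pow p (Q ** (mat_of_entries x :: real^'r^'n)) \<partial>(BG_matrix \<theta> :: (('n \<times> 'r) \<Rightarrow> real) measure))
      = (\<Sum>\<beta>\<in>(UNIV::('n \<times> 'r \<Rightarrow> bool) set). wt \<theta> \<beta> * (\<Sum>i\<in>UNIV. \<Sum>j\<in>UNIV. gamma_p p * sqrt (tt Q i j \<beta>)^p))"
      by (rule integral_formula[OF th p0])
    also have "\<dots> = gamma_p p * (\<Sum>i\<in>UNIV. \<Sum>j\<in>UNIV. \<phi> i j)"
    proof -
      have "(\<Sum>\<beta>\<in>(UNIV::('n \<times> 'r \<Rightarrow> bool) set). wt \<theta> \<beta> * (\<Sum>i\<in>UNIV. \<Sum>j\<in>UNIV. gamma_p p * sqrt (tt Q i j \<beta>)^p))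
          = (\<Sum>\<beta>\<in>(UNIV::('n \<times> 'r \<Rightarrow> bool) set). \<Sum>i\<in>UNIV. \<Sum>j\<in>UNIV. gamma_p p * (wt \<theta> \<beta> * sqrt (tt Q i j \<beta>)^p))"
        by (simp add: sum_distrib_left mult.left_commute)
      also have "\<dots> = (\<Sum>i\<in>UNIV. \<Sum>\<beta>\<in>(UNIV::('n \<times> 'r \<Rightarrow> bool) set). \<Sum>j\<in>UNIV. gamma_p p * (wt \<theta> \<beta> * sqrt (tt Q i j \<beta>)^p))"
        by (rule sum.swap)
      also have "\<dots> = (\<Sum>i\<in>UNIV. \<Sum>j\<in>UNIV. \<Sum>\<beta>\<in>(UNIV::('n \<times> 'r \<Rightarrow> bool) set). gamma_p p * (wt \<theta> \<beta> * sqrt (tt Q i j \<beta>)^p))"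
        by (intro sum.cong refl sum.swap)
      also have "\<dots> = gamma_p p * (\<Sum>i\<in>UNIV. \<Sum>j\<in>UNIV. \<phi> i j)"
        unfolding \<phi>_def EE_def by (simp add: sum_distrib_left)
      finally show ?thesis .
    qed
    finally show ?thesis .
  qed
  have rowb: "\<theta> - \<phi> i j \<ge> \<kappa> * (\<theta> * (1 - \<theta>) * (1 - \<bar>Q$i$(\<sigma> i)\<bar>))" for i j
  proof -
    have inj: "inj (\<lambda>k::'n. (k, j))" by (auto intro: injI)
    have eq: "\<theta> - \<phi> i j = EE \<theta> (\<lambda>\<beta>. (\<Sum>k\<in>UNIV. w i k * ind (\<beta> ((\<lambda>k. (k, j)) k))) - sqrt (\<Sum>k\<in>UNIV. w i k * ind (\<beta> ((\<lambda>k. (k, j)) k))) ^ p)"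
    proof -
      have tteq: "tt Q i j \<beta> = (\<Sum>k\<in>UNIV. w i k * ind (\<beta> ((\<lambda>k. (k, j)) k)))" for \<beta> :: "'n \<times> 'r \<Rightarrow> bool"
        unfolding tt_alt w_def by (rule refl)
      have "\<theta> - \<phi> i j = EE \<theta> (\<lambda>\<beta>::'n \<times> 'r \<Rightarrow> bool. tt Q i j \<beta>) - EE \<theta> (\<lambda>\<beta>::'n \<times> 'r \<Rightarrow> bool. sqrt (tt Q i j \<beta>)^p)"
        unfolding \<phi>_def EE_tt[OF assms(4)] by (rule refl)
      also have "\<dots> = EE \<theta> (\<lambda>\<beta>::'n \<times> 'r \<Rightarrow> bool. tt Q i j \<beta> - sqrt (tt Q i j \<beta>)^p)"
        by (rule EE_diff[symmetric])
      also have "\<dots> = EE \<theta> (\<lambda>\<beta>. (\<Sum>k\<in>UNIV. w i k * ind (\<beta> ((\<lambda>k. (k, j)) k))) - sqrt (\<Sum>k\<in>UNIV. w i k * ind (\<beta> ((\<lambda>k. (k, j)) k))) ^ p)"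
        by (simp only: tteq)
      finally show ?thesis .
    qed
    have q1: "\<bar>Q$i$(\<sigma> i)\<bar> \<le> 1"
      using wle1[of i "\<sigma> i"] by (simp add: w_def abs_square_le_1)
    have k0: "0 \<le> \<kappa> * (\<theta> * (1 - \<theta>))" using \<kappa>0 th by simp
    show ?thesis
    proof (cases "i \<in> S")
      case True
      then have s: "\<sigma> i = f i" using \<sigma>(2) by simp
      have A: "EE \<theta> (\<lambda>\<beta>. (\<Sum>k\<in>UNIV. w i k * ind (\<beta> ((\<lambda>k. (k, j)) k))) - sqrt (\<Sum>k\<in>UNIV. w i k * ind (\<beta> ((\<lambda>k. (k, j)) k))) ^ p)
           \<ge> (1 - 2 * sqrt (1/2) ^ p) * (\<theta> * (1 - \<theta>) * (1 - w i (\<sigma> i)))"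
        by (rule row_caseA[OF th inj w0 w1 p2]) (use fS[OF True] s in simp)
      have "w i (\<sigma> i) \<le> \<bar>Q$i$(\<sigma> i)\<bar>"
      proof -
        have "w i (\<sigma> i) = \<bar>Q$i$(\<sigma> i)\<bar> * \<bar>Q$i$(\<sigma> i)\<bar>"
          unfolding w_def by (simp only: power2_eq_square abs_mult_self_eq)
        also have "\<dots> \<le> 1 * \<bar>Q$i$(\<sigma> i)\<bar>"
          using q1 by (intro mult_right_mono) auto
        finally show ?thesis by simp
      qed
      then have "\<kappa> * (\<theta> * (1 - \<theta>)) * (1 - \<bar>Q$i$(\<sigma> i)\<bar>) \<le> \<kappa> * (\<theta> * (1 - \<theta>)) * (1 - w i (\<sigma> i))"
        using k0 by (intro mult_left_mono) auto
      then show ?thesis using A eq by (simp add: \<kappa>_def mult_ac)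
    next
      case False
      then have wh: "w i k \<le> 1/2" for k by (auto simp: S_def not_less)
      have B: "EE \<theta> (\<lambda>\<beta>. (\<Sum>k\<in>UNIV. w i k * ind (\<beta> ((\<lambda>k. (k, j)) k))) - sqrt (\<Sum>k\<in>UNIV. w i k * ind (\<beta> ((\<lambda>k. (k, j)) k))) ^ p)
           \<ge> (1 - 2 * sqrt (1/2) ^ p) * (\<theta> * (1 - \<theta>))"
        by (rule row_caseB[OF th inj w0 w1 p2 wh])
      have "\<kappa> * (\<theta> * (1 - \<theta>)) * (1 - \<bar>Q$i$(\<sigma> i)\<bar>) \<le> \<kappa> * (\<theta> * (1 - \<theta>)) * 1"
        using k0 by (intro mult_left_mono) auto
      then show ?thesis using B eq by (simp add: \<kappa>_def mult_ac)
    qed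
  qed
  have sumb: "(\<Sum>i\<in>UNIV. \<Sum>j\<in>(UNIV::'r set). \<theta> - \<phi> i j) \<ge> R * (\<kappa> * (\<theta> * (1 - \<theta>) * T))"
  proof -
    have "(\<Sum>i\<in>UNIV. \<Sum>j\<in>(UNIV::'r set). \<kappa> * (\<theta> * (1 - \<theta>) * (1 - \<bar>Q$i$(\<sigma> i)\<bar>))) \<le> (\<Sum>i\<in>UNIV. \<Sum>j\<in>(UNIV::'r set). \<theta> - \<phi> i j)"
      by (intro sum_mono rowb)
    moreover have "(\<Sum>i\<in>UNIV. \<Sum>j\<in>(UNIV::'r set). \<kappa> * (\<theta> * (1 - \<theta>) * (1 - \<bar>Q$i$(\<sigma> i)\<bar>))) = R * (\<kappa> * (\<theta> * (1 - \<theta>) * T))"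
      by (simp add: R_def T_def sum_distrib_left)
    ultimately show ?thesis by simp
  qed
  have sumphi: "(\<Sum>i\<in>UNIV. \<Sum>j\<in>(UNIV::'r set). \<theta> - \<phi> i j) = N * R * \<theta> - (\<Sum>i\<in>UNIV. \<Sum>j\<in>UNIV. \<phi> i j)"
    by (simp add: sum_subtractf N_def R_def sum.distrib)
  have lhs: "\<theta> - (1 / (N * R * gamma_p p)) * (gamma_p p * (\<Sum>i\<in>UNIV. \<Sum>j\<in>UNIV. \<phi> i j)) \<ge> \<kappa> * (\<theta> * (1 - \<theta>) * T) / N"
  proof -
    have "\<theta> - (1 / (N * R * gamma_p p)) * (gamma_p p * (\<Sum>i\<in>UNIV. \<Sum>j\<in>UNIV. \<phi> i j)) = (\<Sum>i\<in>UNIV. \<Sum>j\<in>(UNIV::'r set). \<theta> - \<phi> i j) / (N * R)"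
      using N0 \<gamma> unfolding sumphi by (simp add: field_simps)
    also have "\<dots> \<ge> R * (\<kappa> * (\<theta> * (1 - \<theta>) * T)) / (N * R)"
      using sumb N0 by (intro divide_right_mono) auto
    finally show ?thesis using N0 by simp
  qed
  have rhs: "\<theta> * (1 - \<theta>) / (2 * N * C_p p) * frob_sq (Q - P) = \<kappa> * (\<theta> * (1 - \<theta>) * T) / N"
  proof -
    have "frob_sq (Q - P) = 2 * T" unfolding frob T_def by (simp add: sum_distrib_left algebra_simps)
    then show ?thesis unfolding Cp using N0 by (simp add: field_simps)
  qed
  show ?thesis
    by (rule exI[of _ P]) (use sP lhs rhs integ in \<open>simp add: N_def R_def\<close>)
qed

end
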